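(* Assume (A1)–(A4) and let $b$ be consistent. Let $(\hat x,\hat y)$ be any feasible point. Then the real sequence $\{D_{\mu_k}f(\hat y,y_k)\}_{k\ge1}$ generated by the ADMM is convergent.
   Context: $\mathcal X,\mathcal Y,\mathcal H$ are real Hilbert spaces. Standing assumptions: (A1) $A:\mathcal X\to\mathcal H$ is bounded linear. (A2) $f:\mathcal Y\to(-\infty,\infty]$ is proper, lower semicontinuous and strongly convex with constant $c_0>0$: $f(ty_1+(1-t)y_2)+c_0t(1-t)\|y_1-y_2\|^2\le tf(y_1)+(1-t)f(y_2)$ for all $y_1,y_2$, $t\in[0,1]$. (A3) $W:\mathscr D(W)\subset\mathcal X\to\mathcal Y$ is a densely defined closed linear operator. (A4) There is $c_1>0$ with $\|Ax\|^2+\|Wx\|^2\ge c_1\|x\|^2$ for all $x\in\mathscr D(W)$. $\mathscr D(f)=\{y:f(y)<\infty\}$; $b$ is consistent if $b=Ax$ for some $x\in\mathscr D(W)$ with $Wx\in\mathscr D(f)$. A feasible point is a pair $(\hat x,\hat y)$ with $\hat x\in\mathscr D(W)$, $\hat y\in\mathscr D(f)$, $A\hat x=b$, $W\hat x=\hat y$. ADMM: fix $\rho_1,\rho_2>0$ and initial $y_0\in\mathcal Y$, $\lambda_0\in\mathcal H$, $\mu_0\in\mathcal Y$. For $k=0,1,\dots$: $x_{k+1}=\arg\min_{x\in\mathscr D(W)}\{\langle\lambda_k,Ax\rangle+\langle\mu_k,Wx\rangle+\frac{\rho_1}{2}\|Ax-b\|^2+\frac{\rho_2}{2}\|Wx-y_k\|^2\}$,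 $y_{k+1}=\arg\min_{y\in\mathcal Y}\{f(y)-\langle\mu_k,y\rangle+\frac{\rho_2}{2}\|Wx_{k+1}-y\|^2\}$, $\lambda_{k+1}=\lambda_k+\rho_1(Ax_{k+1}-b)$, $\mu_{k+1}=\mu_k+\rho_2(Wx_{k+1}-y_{k+1})$. (These minimizers exist and are unique.) One has $\mu_k\in\partial f(y_k)$ for $k\ge1$. Bregman distance: for $y$ with $\mu\in\partial f(y)$, $D_\mu f(\bar y,y)=f(\bar y)-f(y)-\langle\mu,\bar y-y\rangle$. *)

theory Defs
  imports "HOL-Analysis.Analysis"
begin

definition proper_fun :: "('y \<Rightarrow> ereal) \<Rightarrow> bool" where
  "proper_fun f \<longleftrightarrow> (\<forall>y. f y \<noteq> -\<infinity>) \<and> (\<exists>y. f y < \<infinity>)"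

definition lsc_fun :: "('y::topological_space \<Rightarrow> ereal) \<Rightarrow> bool" where
  "lsc_fun f \<longleftrightarrow> (\<forall>c::real. closed {y. f y \<le> ereal c})"

definition strongly_convex :: "real \<Rightarrow> ('y::real_normed_vector \<Rightarrow> ereal) \<Rightarrow> bool" where
  "strongly_convex c0 f \<longleftrightarrow>
     (\<forall>y1 y2 t. 0 \<le> t \<and> t \<le> 1 \<longrightarrow>
        f (t *\<^sub>R y1 + (1 - t) *\<^sub>R y2) + ereal (c0 * t * (1 - t) * (norm (y1 - y2))\<^sup>2)
          \<le> ereal t * f y1 + ereal (1 - t) * f y2)"

definition dom_fun :: "('y \<Rightarrow> ereal) \<Rightarrow> 'y set" where
  "dom_fun f = {y. f y < \<infinity>}"

definition closed_dd_operator :: "'x::real_normed_vector set \<Rightarrow> ('x \<Rightarrow> 'y::real_normed_vector) \<Rightarrow> bool" where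
  "closed_dd_operator D W \<longleftrightarrow>
     subspace D \<and>
     (\<forall>u\<in>D. \<forall>v\<in>D. W (u + v) = W u + W v) \<and>
     (\<forall>u\<in>D. \<forall>c. W (c *\<^sub>R u) = c *\<^sub>R W u) \<and>
     closure D = UNIV \<and>
     closed {(u, W u) | u. u \<in> D}"

definition consistent ::
  "('x \<Rightarrow> 'h) \<Rightarrow> 'x set \<Rightarrow> ('x \<Rightarrow> 'y) \<Rightarrow> ('y \<Rightarrow> ereal) \<Rightarrow> 'h \<Rightarrow> bool" where
  "consistent A D W f b \<longleftrightarrow> (\<exists>u\<in>D. b = A u \<and> W u \<in> dom_fun f)"

definition feasible ::
  "('x \<Rightarrow> 'h) \<Rightarrow> 'x set \<Rightarrow> ('x \<Rightarrow> 'y) \<Rightarrow> ('y \<Rightarrow> ereal) \<Rightarrow> 'h \<Rightarrow> 'x \<Rightarrow> 'y \<Rightarrow> bool" where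
  "feasible A D W f b xh yh \<longleftrightarrow> xh \<in> D \<and> yh \<in> dom_fun f \<and> A xh = b \<and> W xh = yh"

text \<open>The ADMM iteration: the sequences (x,y,lam,mu) are generated from the
  initial data y 0, lam 0, mu 0 (x 0 plays no role).  Since the minimizers exist
  and are unique, we characterize them as minimizers.\<close>
definition admm ::
  "('x::real_inner \<Rightarrow> 'h::real_inner) \<Rightarrow> 'x set \<Rightarrow> ('x \<Rightarrow> 'y::real_inner) \<Rightarrow> ('y \<Rightarrow> ereal) \<Rightarrow> 'h
   \<Rightarrow> real \<Rightarrow> real \<Rightarrow> (nat \<Rightarrow> 'x) \<Rightarrow> (nat \<Rightarrow> 'y) \<Rightarrow> (nat \<Rightarrow> 'h) \<Rightarrow> (nat \<Rightarrow> 'y) \<Rightarrow> bool" where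
  "admm A D W f b \<rho>1 \<rho>2 x y lam mu \<longleftrightarrow>
     (\<forall>k.
        x (Suc k) \<in> D \<and>
        (\<forall>u\<in>D.
           inner (lam k) (A (x (Suc k))) + inner (mu k) (W (x (Suc k)))
             + \<rho>1 / 2 * (norm (A (x (Suc k)) - b))\<^sup>2 + \<rho>2 / 2 * (norm (W (x (Suc k)) - y k))\<^sup>2
           \<le> inner (lam k) (A u) + inner (mu k) (W u)
             + \<rho>1 / 2 * (norm (A u - b))\<^sup>2 + \<rho>2 / 2 * (norm (W u - y k))\<^sup>2) \<and>
        (\<forall>v.
           f (y (Suc k)) - ereal (inner (mu k) (y (Suc k)))
             + ereal (\<rho>2 / 2 * (norm (W (x (Suc k)) - y (Suc k)))\<^sup>2)
           \<le> f v - ereal (inner (mu k) v) + ereal (\<rho>2 / 2 * (norm (W (x (Suc k)) - v))\<^sup>2)) \<and>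
        lam (Suc k) = lam k + \<rho>1 *\<^sub>R (A (x (Suc k)) - b) \<and>
        mu (Suc k) = mu k + \<rho>2 *\<^sub>R (W (x (Suc k)) - y (Suc k)))"

definition bregman :: "('y::real_inner \<Rightarrow> ereal) \<Rightarrow> 'y \<Rightarrow> 'y \<Rightarrow> 'y \<Rightarrow> ereal" where
  "bregman f mu ybar y = f ybar - f y - ereal (inner mu (ybar - y))"

end

theory Submission
  imports Defs
begin

lemma eps_le:
  fixes X Y C :: real
  assumes H: "\<And>t. 0 < t \<Longrightarrow> t \<le> 1 \<Longrightarrow> X \<le> Y + t * C"
  shows "X \<le> Y"
proof (rule ccontr)
  assume "\<not> X \<le> Y"
  hence XY: "X > Y" by simp
  show False
  proof (cases "C \<le> 0")
    case True
    have "X \<le> Y + 1 * C" using H[of 1] by simp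
    thus False using True XY by simp
  next
    case False
    define t where "t = min 1 ((X - Y) / (2 * C))"
    have t0: "0 < t" using False XY by (simp add: t_def)
    have t1: "t \<le> 1" by (simp add: t_def)
    have "t * C \<le> (X - Y) / (2 * C) * C"
      using False by (intro mult_right_mono) (auto simp: t_def)
    also have "\<dots> = (X - Y) / 2" using False by (simp add: field_simps)
    finally have a: "t * C \<le> (X - Y) / 2" .
    have b: "X \<le> Y + t * C" by (rule H[OF t0 t1])
    from a b XY show False by argo
  qed
qed

lemma quad_zero:
  fixes L M :: real
  assumes H: "\<And>t. 0 \<le> t * L + t\<^sup>2 * M" and M: "M \<ge> 0"
  shows "L = 0"
proof (rule ccontr)
  assume L: "L \<noteq> 0"
  define c where "c = M + 1"
  have c0: "c > 0" using M by (simp add: c_def)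
  define t where "t = - L / c"
  have t0: "t \<noteq> 0" using L c0 by (simp add: t_def)
  have "t * L + t\<^sup>2 * c = 0"
    using c0 by (simp add: t_def power2_eq_square field_simps)
  moreover have "t\<^sup>2 > 0" using t0 by simp
  moreover have "t * L + t\<^sup>2 * M = (t * L + t\<^sup>2 * c) - t\<^sup>2" by (simp add: c_def algebra_simps)
  ultimately have "t * L + t\<^sup>2 * M < 0" by linarith
  thus False using H[of t] by linarith
qed

lemma norm_plus_scale_sq:
  fixes p q :: "'a::real_inner"
  shows "(norm (p + t *\<^sub>R q))\<^sup>2 = (norm p)\<^sup>2 + 2 * t * inner p q + t\<^sup>2 * (norm q)\<^sup>2"
proof -
  have "(norm (p + t *\<^sub>R q))\<^sup>2 = inner (p + t *\<^sub>R q) (p + t *\<^sub>R q)" by (rule power2_norm_eq_inner)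
  also have "\<dots> = inner p p + 2 * t * inner p q + t\<^sup>2 * inner q q"
    by (simp add: inner_add_left inner_add_right inner_commute power2_eq_square algebra_simps)
  finally show ?thesis by (simp add: power2_norm_eq_inner)
qed

lemma prox_subgrad:
  fixes f :: "'y::real_inner \<Rightarrow> ereal"
  assumes sc: "strongly_convex c0 f" and rho: "\<rho>2 > 0"
    and nm: "\<And>y. f y \<noteq> -\<infinity>"
    and fin: "f yp = ereal Fp"
    and opt: "\<And>v. f yp - ereal (inner m yp) + ereal (\<rho>2 / 2 * (norm (a0 - yp))\<^sup>2)
           \<le> f v - ereal (inner m v) + ereal (\<rho>2 / 2 * (norm (a0 - v))\<^sup>2)"
  shows "f z \<ge> ereal (Fp + inner (m + \<rho>2 *\<^sub>R (a0 - yp)) (z - yp) + c0 * (norm (z - yp))\<^sup>2)"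
proof (cases "f z")
  case PInf
  then show ?thesis by simp
next
  case MInf
  then show ?thesis using nm by simp
next
  case (real Z)
  define d where "d = z - yp"
  define a where "a = a0 - yp"
  define N where "N = (norm d)\<^sup>2"
  have N0: "N \<ge> 0" by (simp add: N_def)
  have key: "Fp + inner m d + \<rho>2 * inner a d + c0 * N \<le> Z + t * ((c0 + \<rho>2 / 2) * N)"
    if t0: "0 < t" and t1: "t \<le> 1" for t
  proof -
    define v where "v = t *\<^sub>R z + (1 - t) *\<^sub>R yp"
    have v_eq: "v = yp + t *\<^sub>R d" by (simp add: v_def d_def algebra_simps)
    have cv: "f v + ereal (c0 * t * (1 - t) * (norm (z - yp))\<^sup>2)
          \<le> ereal t * f z + ereal (1 - t) * f yp"
      using sc t0 t1 unfolding strongly_convex_def v_def by auto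
    hence cv': "f v + ereal (c0 * t * (1 - t) * N) \<le> ereal (t * Z + (1 - t) * Fp)"
      using real fin by (simp add: N_def d_def)
    obtain Fv where Fv: "f v = ereal Fv"
      using cv' nm[of v] by (cases "f v") auto
    have cvr: "Fv + c0 * t * (1 - t) * N \<le> t * Z + (1 - t) * Fp"
      using cv' Fv by simp
    have op: "Fp - inner m yp + \<rho>2 / 2 * (norm a)\<^sup>2
           \<le> Fv - inner m v + \<rho>2 / 2 * (norm (a0 - v))\<^sup>2"
      using opt[of v] fin Fv by (simp add: a_def)
    have "a0 - v = a + (- t) *\<^sub>R d" by (simp add: v_eq a_def algebra_simps)
    hence nv: "(norm (a0 - v))\<^sup>2 = (norm a)\<^sup>2 - 2 * t * inner a d + t\<^sup>2 * N"
      using norm_plus_scale_sq[of a "- t" d] by (simp add: N_def)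
    have iv: "inner m v = inner m yp + t * inner m d" by (simp add: v_eq inner_add_right)
    have "Fp \<le> Fv - t * inner m d - \<rho>2 * t * inner a d + \<rho>2 / 2 * t\<^sup>2 * N"
      using op nv iv by (simp add: algebra_simps)
    hence "t * Fp \<le> t * (Z - c0 * (1 - t) * N - inner m d - \<rho>2 * inner a d + \<rho>2 / 2 * t * N)"
      using cvr by (simp add: algebra_simps power2_eq_square)
    hence "Fp \<le> Z - c0 * (1 - t) * N - inner m d - \<rho>2 * inner a d + \<rho>2 / 2 * t * N"
      using t0 by simp
    thus ?thesis by (simp add: algebra_simps)
  qed
  have "Fp + inner m d + \<rho>2 * inner a d + c0 * N \<le> Z"
    by (rule eps_le[OF key])
  thus ?thesis using real
    by (simp add: a_def d_def N_def inner_add_left)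
qed

lemma xstep:
  fixes A :: "'x::real_inner \<Rightarrow> 'h::real_inner" and W :: "'x \<Rightarrow> 'y::real_inner"
  assumes A: "bounded_linear A" and W: "closed_dd_operator D W"
    and xp: "xp \<in> D" and u: "u \<in> D"
    and opt: "\<forall>u\<in>D.
           inner l (A xp) + inner m (W xp)
             + \<rho>1 / 2 * (norm (A xp - b))\<^sup>2 + \<rho>2 / 2 * (norm (W xp - yk))\<^sup>2
           \<le> inner l (A u) + inner m (W u)
             + \<rho>1 / 2 * (norm (A u - b))\<^sup>2 + \<rho>2 / 2 * (norm (W u - yk))\<^sup>2"
    and r1: "\<rho>1 > 0" and r2: "\<rho>2 > 0"
  shows "inner (l + \<rho>1 *\<^sub>R (A xp - b)) (A u) + inner (m + \<rho>2 *\<^sub>R (W xp - yk)) (W u) = 0"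
proof -
  interpret A: bounded_linear A by (rule A)
  have sub: "subspace D" and Wadd: "\<And>u v. u \<in> D \<Longrightarrow> v \<in> D \<Longrightarrow> W (u + v) = W u + W v"
    and Wsc: "\<And>u c. u \<in> D \<Longrightarrow> W (c *\<^sub>R u) = c *\<^sub>R W u"
    using W unfolding closed_dd_operator_def by auto
  define L where "L = inner (l + \<rho>1 *\<^sub>R (A xp - b)) (A u) + inner (m + \<rho>2 *\<^sub>R (W xp - yk)) (W u)"
  define M where "M = \<rho>1 / 2 * (norm (A u))\<^sup>2 + \<rho>2 / 2 * (norm (W u))\<^sup>2"
  have M0: "M \<ge> 0" using r1 r2 by (simp add: M_def)
  have "0 \<le> t * L + t\<^sup>2 * M" for t
  proof -
    have tu: "t *\<^sub>R u \<in> D" using sub u by (simp add: subspace_scale)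
    have mem: "xp + t *\<^sub>R u \<in> D" using sub xp tu by (simp add: subspace_add)
    have Ae: "A (xp + t *\<^sub>R u) - b = (A xp - b) + t *\<^sub>R A u" by (simp add: A.add A.scaleR)
    have We: "W (xp + t *\<^sub>R u) - yk = (W xp - yk) + t *\<^sub>R W u" using Wadd[OF xp tu] Wsc[OF u] by simp
    have o: "inner l (A xp) + inner m (W xp)
             + \<rho>1 / 2 * (norm (A xp - b))\<^sup>2 + \<rho>2 / 2 * (norm (W xp - yk))\<^sup>2
           \<le> inner l (A (xp + t *\<^sub>R u)) + inner m (W (xp + t *\<^sub>R u))
             + \<rho>1 / 2 * (norm (A (xp + t *\<^sub>R u) - b))\<^sup>2 + \<rho>2 / 2 * (norm (W (xp + t *\<^sub>R u) - yk))\<^sup>2"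
      using opt mem by blast
    have i1: "inner l (A (xp + t *\<^sub>R u)) = inner l (A xp) + t * inner l (A u)"
      by (simp add: A.add A.scaleR inner_add_right)
    have i2: "inner m (W (xp + t *\<^sub>R u)) = inner m (W xp) + t * inner m (W u)"
      using Wadd[OF xp tu] Wsc[OF u] by (simp add: inner_add_right)
    have n1: "(norm (A (xp + t *\<^sub>R u) - b))\<^sup>2 = (norm (A xp - b))\<^sup>2 + 2 * t * inner (A xp - b) (A u) + t\<^sup>2 * (norm (A u))\<^sup>2"
      unfolding Ae by (rule norm_plus_scale_sq)
    have n2: "(norm (W (xp + t *\<^sub>R u) - yk))\<^sup>2 = (norm (W xp - yk))\<^sup>2 + 2 * t * inner (W xp - yk) (W u) + t\<^sup>2 * (norm (W u))\<^sup>2"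
      unfolding We by (rule norm_plus_scale_sq)
    have o2: "0 \<le> t * inner l (A u) + t * inner m (W u) + \<rho>1 / 2 * (2 * t * inner (A xp - b) (A u) + t\<^sup>2 * (norm (A u))\<^sup>2)
         + \<rho>2 / 2 * (2 * t * inner (W xp - yk) (W u) + t\<^sup>2 * (norm (W u))\<^sup>2)"
      using o unfolding i1 i2 n1 n2 by (simp add: algebra_simps)
    have "t * L + t\<^sup>2 * M = t * inner l (A u) + t * inner m (W u) + \<rho>1 / 2 * (2 * t * inner (A xp - b) (A u) + t\<^sup>2 * (norm (A u))\<^sup>2)
         + \<rho>2 / 2 * (2 * t * inner (W xp - yk) (W u) + t\<^sup>2 * (norm (W u))\<^sup>2)"
      by (simp add: L_def M_def inner_add_left algebra_simps)
    thus ?thesis using o2 by linarith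
  qed
  hence "L = 0" using quad_zero M0 by blast
  thus ?thesis by (simp add: L_def)
qed

lemma Qstep_alg:
  fixes s1 s2 :: "'h::real_inner" and r1 r2 d1 d2 :: "'y::real_inner"
  assumes E: "inner (\<rho>1 *\<^sub>R s2) (s2 - s1) + inner (\<rho>2 *\<^sub>R r2 + \<rho>2 *\<^sub>R (d2 - d1)) (r2 - r1 + d2) = 0"
    and mono: "inner (\<rho>2 *\<^sub>R r2) d2 \<ge> 2 * c0 * (norm d2)\<^sup>2"
    and p1: "\<rho>1 > 0" and p2: "\<rho>2 > 0"
  shows "\<rho>1 * (norm s2)\<^sup>2 + \<rho>2 * (norm r2)\<^sup>2 + \<rho>2 * (norm d2)\<^sup>2 + 4 * c0 * (norm d2)\<^sup>2
     \<le> \<rho>1 * (norm s1)\<^sup>2 + \<rho>2 * (norm r1)\<^sup>2 + \<rho>2 * (norm d1)\<^sup>2"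
proof -
  have n1: "0 \<le> \<rho>1 * inner (s2 - s1) (s2 - s1)" using p1 by simp
  have n2: "0 \<le> \<rho>2 * inner ((d2 - d1) + (r2 - r1)) ((d2 - d1) + (r2 - r1))" using p2 by simp
  show ?thesis using E mono n1 n2
    by (simp add: power2_norm_eq_inner inner_add_left inner_add_right inner_diff_left inner_diff_right
        inner_commute algebra_simps)
qed

lemma Estep_alg:
  fixes s2 :: "'h::real_inner" and r2 d1 d2 v1 v2 :: "'y::real_inner"
  assumes Ds: "D2 - D1 \<le> \<rho>2 * inner r2 v2 - c0 * (norm d2)\<^sup>2"
    and E: "inner (\<rho>1 *\<^sub>R s2) s2 + inner (\<rho>2 *\<^sub>R r2 + \<rho>2 *\<^sub>R (d2 - d1)) (r2 + v2) = 0"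
    and vv: "v2 = v1 + d2"
    and mono: "inner (\<rho>2 *\<^sub>R r2) d2 \<ge> 0"
    and p1: "\<rho>1 > 0" and p2: "\<rho>2 > 0" and c: "c0 > 0"
  shows "D2 + \<rho>2 * inner d2 v2 \<le> D1 + \<rho>2 * inner d1 v1 + \<rho>2 * ((norm d1)\<^sup>2 + (norm d2)\<^sup>2)"
proof -
  have n0: "0 \<le> \<rho>1 * inner s2 s2" using p1 by simp
  have n1: "0 \<le> \<rho>2 * inner (r2 - (1/2) *\<^sub>R d1) (r2 - (1/2) *\<^sub>R d1)" using p2 by simp
  have n2: "0 \<le> \<rho>2 * inner (d1 - d2) (d1 - d2)" using p2 by simp
  have n3: "0 \<le> c0 * inner d2 d2" using c by simp
  have n4: "0 \<le> \<rho>2 * inner d2 d2" "0 \<le> \<rho>2 * inner d1 d1" using p2 by simp_all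
  show ?thesis using Ds E mono n0 n1 n2 n3 n4 unfolding vv
    apply (simp add: power2_norm_eq_inner inner_add_left inner_add_right inner_diff_left inner_diff_right
        inner_commute algebra_simps)
    done
qed

lemma quasi_fejer_conv:
  fixes E g :: "nat \<Rightarrow> real"
  assumes step: "\<And>m. E (Suc m) \<le> E m + g m" and sg: "summable g" and g0: "\<And>m. g m \<ge> 0"
    and lb: "\<And>m. E m \<ge> B"
  shows "convergent E"
proof -
  define G where "G m = E m - (\<Sum>i<m. g i)" for m
  have dec: "decseq G"
  proof (rule decseq_SucI)
    fix n show "G (Suc n) \<le> G n" using step[of n] by (simp add: G_def)
  qed
  have sl: "(\<Sum>i<m. g i) \<le> suminf g" for m
    using g0 by (intro sum_le_suminf[OF sg]) auto
  have "B - suminf g \<le> G m" for m using lb[of m] sl[of m] by (simp add: G_def)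
  hence "\<forall>m. B - suminf g \<le> G m" by blast
  then obtain L where L: "G \<longlonglongrightarrow> L" using decseq_convergent[OF dec] by blast
  have "(\<lambda>m. G m + (\<Sum>i<m. g i)) \<longlonglongrightarrow> L + suminf g"
    by (intro tendsto_add L summable_LIMSEQ sg)
  hence "E \<longlonglongrightarrow> L + suminf g" by (simp add: G_def)
  thus ?thesis by (auto simp: convergent_def)
qed

lemma sum_bounded_summable:
  fixes q e :: "nat \<Rightarrow> real"
  assumes step: "\<And>m. q (Suc m) + e m \<le> q m" and q0: "\<And>m. q m \<ge> 0" and e0: "\<And>m. e m \<ge> 0"
  shows "summable e" and "\<And>m. q m \<le> q 0"
proof -
  have "(\<Sum>i<n. e i) \<le> q 0 - q n" for n
  proof (induction n)
    case 0 then show ?case by simp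
  next
    case (Suc n) then show ?case using step[of n] by simp
  qed
  hence "(\<Sum>i<n. e i) \<le> q 0" for n using q0[of n] by smt
  thus "summable e" by (rule summableI_nonneg_bounded[OF e0])
  show "q m \<le> q 0" for m
  proof (induction m)
    case (Suc m) then show ?case using step[of m] e0[of m] by simp
  qed simp
qed

lemma lowq:
  fixes c0 t p :: real
  assumes "c0 > 0"
  shows "c0 * t\<^sup>2 - p * t \<ge> - (p\<^sup>2 / (4 * c0))"
proof -
  have "c0 * t\<^sup>2 - p * t + p\<^sup>2 / (4 * c0) = (2 * c0 * t - p)\<^sup>2 / (4 * c0)"
    using assms by (simp add: field_simps power2_eq_square)
  moreover have "(2 * c0 * t - p)\<^sup>2 / (4 * c0) \<ge> 0" using assms by simp
  ultimately show ?thesis by linarith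
qed

theorem lemma2p6:
  fixes A :: "'x::{real_inner, complete_space} \<Rightarrow> 'h::{real_inner, complete_space}"
    and W :: "'x \<Rightarrow> 'y::{real_inner, complete_space}"
    and D :: "'x set"
    and f :: "'y \<Rightarrow> ereal"
    and b :: 'h and c0 c1 \<rho>1 \<rho>2 :: real
    and x :: "nat \<Rightarrow> 'x" and y :: "nat \<Rightarrow> 'y" and lam :: "nat \<Rightarrow> 'h" and mu :: "nat \<Rightarrow> 'y"
    and xh :: 'x and yh :: 'y
  assumes A1: "bounded_linear A"
    and A2: "proper_fun f" "lsc_fun f" "c0 > 0" "strongly_convex c0 f"
    and A3: "closed_dd_operator D W"
    and A4: "c1 > 0" "\<forall>u\<in>D. (norm (A u))\<^sup>2 + (norm (W u))\<^sup>2 \<ge> c1 * (norm u)\<^sup>2"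
    and cons: "consistent A D W f b"
    and rho: "\<rho>1 > 0" "\<rho>2 > 0"
    and iter: "admm A D W f b \<rho>1 \<rho>2 x y lam mu"
    and feas: "feasible A D W f b xh yh"
  shows "\<exists>L::real. (\<lambda>k. bregman f (mu (Suc k)) yh (y (Suc k))) \<longlonglongrightarrow> ereal L"
proof -
  interpret A: bounded_linear A by (rule A1)
  have c0: "c0 > 0" and r1: "\<rho>1 > 0" and r2: "\<rho>2 > 0" using A2 rho by auto
  have sub: "subspace D" and Wadd: "\<And>u v. u \<in> D \<Longrightarrow> v \<in> D \<Longrightarrow> W (u + v) = W u + W v"
    and Wsc: "\<And>u c. u \<in> D \<Longrightarrow> W (c *\<^sub>R u) = c *\<^sub>R W u"
    using A3 unfolding closed_dd_operator_def by auto
  have Wdiff: "W (u - w) = W u - W w" if "u \<in> D" "w \<in> D" for u w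
  proof -
    have neg: "- w \<in> D" using sub that by (simp add: subspace_neg)
    have "W (- w) = - W w" using Wsc[OF that(2), of "-1"] by simp
    moreover have "W (u + - w) = W u + W (- w)" by (rule Wadd[OF that(1) neg])
    ultimately have "W (u + - w) = W u - W w" by simp
    thus ?thesis by simp
  qed
  have xD: "\<And>k. x (Suc k) \<in> D"
    and xopt: "\<And>k. \<forall>u\<in>D.
           inner (lam k) (A (x (Suc k))) + inner (mu k) (W (x (Suc k)))
             + \<rho>1 / 2 * (norm (A (x (Suc k)) - b))\<^sup>2 + \<rho>2 / 2 * (norm (W (x (Suc k)) - y k))\<^sup>2
           \<le> inner (lam k) (A u) + inner (mu k) (W u)
             + \<rho>1 / 2 * (norm (A u - b))\<^sup>2 + \<rho>2 / 2 * (norm (W u - y k))\<^sup>2"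
    and yopt: "\<And>k v. f (y (Suc k)) - ereal (inner (mu k) (y (Suc k)))
             + ereal (\<rho>2 / 2 * (norm (W (x (Suc k)) - y (Suc k)))\<^sup>2)
           \<le> f v - ereal (inner (mu k) v) + ereal (\<rho>2 / 2 * (norm (W (x (Suc k)) - v))\<^sup>2)"
    and lamu: "\<And>k. lam (Suc k) = lam k + \<rho>1 *\<^sub>R (A (x (Suc k)) - b)"
    and muu: "\<And>k. mu (Suc k) = mu k + \<rho>2 *\<^sub>R (W (x (Suc k)) - y (Suc k))"
    using iter unfolding admm_def by blast+
  have nm: "\<And>y. f y \<noteq> -\<infinity>" and ex: "\<exists>y. f y < \<infinity>" using A2(1) unfolding proper_fun_def by auto
  have xhD: "xh \<in> D" and Axh: "A xh = b" and Wxh: "W xh = yh" and yhd: "f yh < \<infinity>"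
    using feas unfolding feasible_def dom_fun_def by auto
  define F where "F n = real_of_ereal (f (y n))" for n
  define Fh where "Fh = real_of_ereal (f yh)"
  have finh: "f yh = ereal Fh" using yhd nm[of yh] unfolding Fh_def by (cases "f yh") auto
  have fin: "f (y (Suc k)) = ereal (F (Suc k))" for k
  proof -
    obtain y0 where y0: "f y0 < \<infinity>" using ex by blast
    have "f (y (Suc k)) \<noteq> \<infinity>"
    proof
      assume inf: "f (y (Suc k)) = \<infinity>"
      have "\<infinity> \<le> f y0 - ereal (inner (mu k) y0) + ereal (\<rho>2 / 2 * (norm (W (x (Suc k)) - y0))\<^sup>2)"
        using yopt[of k y0] inf by simp
      thus False using y0 nm[of y0] by (cases "f y0") auto
    qed
    thus ?thesis using nm[of "y (Suc k)"] unfolding F_def by (cases "f (y (Suc k))") auto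
  qed
  have subg: "f z \<ge> ereal (F (Suc k) + inner (mu (Suc k)) (z - y (Suc k)) + c0 * (norm (z - y (Suc k)))\<^sup>2)"
    for k z
    using prox_subgrad[OF A2(4) r2 nm fin[of k] yopt[of k], of z] muu[of k] by simp
  have subgR: "F (Suc j) \<ge> F (Suc k) + inner (mu (Suc k)) (y (Suc j) - y (Suc k)) + c0 * (norm (y (Suc j) - y (Suc k)))\<^sup>2"
    for k j using subg[of k "y (Suc j)"] fin[of j] by simp
  have subgH: "Fh \<ge> F (Suc k) + inner (mu (Suc k)) (yh - y (Suc k)) + c0 * (norm (yh - y (Suc k)))\<^sup>2"
    for k using subg[of k yh] finh by simp
  have xeq: "inner (lam (Suc k)) (A u) + inner (mu (Suc k) + \<rho>2 *\<^sub>R (y (Suc k) - y k)) (W u) = 0"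
    if u: "u \<in> D" for k u
  proof -
    have "inner (lam k + \<rho>1 *\<^sub>R (A (x (Suc k)) - b)) (A u) + inner (mu k + \<rho>2 *\<^sub>R (W (x (Suc k)) - y k)) (W u) = 0"
      by (rule xstep[OF A1 A3 xD u xopt r1 r2])
    moreover have "mu (Suc k) + \<rho>2 *\<^sub>R (y (Suc k) - y k) = mu k + \<rho>2 *\<^sub>R (W (x (Suc k)) - y k)"
      by (simp add: muu algebra_simps)
    ultimately show ?thesis by (simp add: lamu)
  qed
  define s where "s n = A (x n) - b" for n
  define r where "r n = W (x n) - y n" for n
  define d where "d n = y (Suc n) - y n" for n
  define v where "v n = y n - yh" for n
  define Dn where "Dn n = Fh - F n - inner (mu n) (yh - y n)" for n
  define Q where "Q n = \<rho>1 * (norm (s (Suc n)))\<^sup>2 + \<rho>2 * (norm (r (Suc n)))\<^sup>2 + \<rho>2 * (norm (d n))\<^sup>2" for n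
  define Et where "Et n = Dn (Suc n) + \<rho>2 * inner (d n) (v (Suc n))" for n
  have mono: "inner (\<rho>2 *\<^sub>R r (Suc (Suc k))) (d (Suc k)) \<ge> 2 * c0 * (norm (d (Suc k)))\<^sup>2" for k
  proof -
    have a: "F (Suc (Suc k)) \<ge> F (Suc k) + inner (mu (Suc k)) (d (Suc k)) + c0 * (norm (d (Suc k)))\<^sup>2"
      using subgR[of k "Suc k"] by (simp add: d_def)
    have b: "F (Suc k) \<ge> F (Suc (Suc k)) - inner (mu (Suc (Suc k))) (d (Suc k)) + c0 * (norm (d (Suc k)))\<^sup>2"
      using subgR[of "Suc k" k] by (simp add: d_def norm_minus_commute inner_diff_right)
    have "inner (\<rho>2 *\<^sub>R r (Suc (Suc k))) (d (Suc k)) = inner (mu (Suc (Suc k))) (d (Suc k)) - inner (mu (Suc k)) (d (Suc k))"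
      by (simp add: r_def muu[of "Suc k"] inner_add_left)
    thus ?thesis using a b by linarith
  qed
  have xdiff: "inner (\<rho>1 *\<^sub>R s (Suc (Suc m))) (A u) + inner (\<rho>2 *\<^sub>R r (Suc (Suc m)) + \<rho>2 *\<^sub>R (d (Suc m) - d m)) (W u) = 0"
    if u: "u \<in> D" for m u
  proof -
    have e1: "inner (lam (Suc m) + \<rho>1 *\<^sub>R s (Suc (Suc m))) (A u)
       + inner (mu (Suc m) + (\<rho>2 *\<^sub>R r (Suc (Suc m)) + \<rho>2 *\<^sub>R d (Suc m))) (W u) = 0"
      using xeq[OF u, of "Suc m"] by (simp add: lamu[of "Suc m"] muu[of "Suc m"] s_def r_def d_def algebra_simps)
    have e0: "inner (lam (Suc m)) (A u) + inner (mu (Suc m) + \<rho>2 *\<^sub>R d m) (W u) = 0"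
      using xeq[OF u, of m] by (simp add: d_def)
    have "inner (\<rho>1 *\<^sub>R s (Suc (Suc m))) (A u) + inner (\<rho>2 *\<^sub>R r (Suc (Suc m)) + \<rho>2 *\<^sub>R (d (Suc m) - d m)) (W u)
      = (inner (lam (Suc m) + \<rho>1 *\<^sub>R s (Suc (Suc m))) (A u)
       + inner (mu (Suc m) + (\<rho>2 *\<^sub>R r (Suc (Suc m)) + \<rho>2 *\<^sub>R d (Suc m))) (W u))
       - (inner (lam (Suc m)) (A u) + inner (mu (Suc m) + \<rho>2 *\<^sub>R d m) (W u))"
      by (simp add: inner_add_left inner_diff_left scaleR_diff_right)
    thus ?thesis using e1 e0 by simp
  qed
  have Qstep: "Q (Suc m) + 4 * c0 * (norm (d (Suc m)))\<^sup>2 \<le> Q m" for m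
  proof -
    have u: "x (Suc (Suc m)) - x (Suc m) \<in> D" using sub xD by (simp add: subspace_diff)
    have Au: "A (x (Suc (Suc m)) - x (Suc m)) = s (Suc (Suc m)) - s (Suc m)" by (simp add: A.diff s_def)
    have Wu: "W (x (Suc (Suc m)) - x (Suc m)) = r (Suc (Suc m)) - r (Suc m) + d (Suc m)"
      using Wdiff[OF xD xD] by (simp add: r_def d_def)
    have E: "inner (\<rho>1 *\<^sub>R s (Suc (Suc m))) (s (Suc (Suc m)) - s (Suc m))
      + inner (\<rho>2 *\<^sub>R r (Suc (Suc m)) + \<rho>2 *\<^sub>R (d (Suc m) - d m)) (r (Suc (Suc m)) - r (Suc m) + d (Suc m)) = 0"
      using xdiff[OF u, of m] unfolding Au Wu .
    show ?thesis using Qstep_alg[OF E mono[of m] r1 r2] by (simp add: Q_def)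
  qed
  have Estep: "Et (Suc m) \<le> Et m + \<rho>2 * ((norm (d m))\<^sup>2 + (norm (d (Suc m)))\<^sup>2)" for m
  proof -
    have u: "x (Suc (Suc m)) - xh \<in> D" using sub xD xhD by (simp add: subspace_diff)
    have Au: "A (x (Suc (Suc m)) - xh) = s (Suc (Suc m))" by (simp add: A.diff s_def Axh)
    have Wu: "W (x (Suc (Suc m)) - xh) = r (Suc (Suc m)) + v (Suc (Suc m))"
      using Wdiff[OF xD xhD] by (simp add: r_def v_def Wxh)
    have E: "inner (\<rho>1 *\<^sub>R s (Suc (Suc m))) (s (Suc (Suc m)))
      + inner (\<rho>2 *\<^sub>R r (Suc (Suc m)) + \<rho>2 *\<^sub>R (d (Suc m) - d m)) (r (Suc (Suc m)) + v (Suc (Suc m))) = 0"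
      using xdiff[OF u, of m] unfolding Au Wu .
    have vv: "v (Suc (Suc m)) = v (Suc m) + d (Suc m)" by (simp add: v_def d_def)
    have mo: "inner (\<rho>2 *\<^sub>R r (Suc (Suc m))) (d (Suc m)) \<ge> 0"
    proof -
      have h: "0 \<le> 2 * c0 * (norm (d (Suc m)))\<^sup>2" using c0 by simp
      show ?thesis using mono[of m] h by linarith
    qed
    have a: "F (Suc (Suc m)) \<ge> F (Suc m) + inner (mu (Suc m)) (d (Suc m)) + c0 * (norm (d (Suc m)))\<^sup>2"
      using subgR[of m "Suc m"] by (simp add: d_def)
    have "Dn (Suc (Suc m)) - Dn (Suc m) = F (Suc m) - F (Suc (Suc m)) + inner (mu (Suc m)) (d (Suc m))
        + \<rho>2 * inner (r (Suc (Suc m))) (v (Suc (Suc m)))"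
      by (simp add: Dn_def muu[of "Suc m"] r_def v_def d_def inner_add_left inner_diff_right algebra_simps)
    hence Ds: "Dn (Suc (Suc m)) - Dn (Suc m) \<le> \<rho>2 * inner (r (Suc (Suc m))) (v (Suc (Suc m))) - c0 * (norm (d (Suc m)))\<^sup>2"
      using a by linarith
    show ?thesis using Estep_alg[OF Ds E vv mo r1 r2 c0] by (simp add: Et_def)
  qed
  have Q0: "Q m \<ge> 0" for m using r1 r2 by (simp add: Q_def)
  have e0: "4 * c0 * (norm (d (Suc m)))\<^sup>2 \<ge> 0" for m using c0 by simp
  have sQ: "summable (\<lambda>m. 4 * c0 * (norm (d (Suc m)))\<^sup>2)" and Qle: "\<And>m. Q m \<le> Q 0"
    using sum_bounded_summable[of Q "\<lambda>m. 4 * c0 * (norm (d (Suc m)))\<^sup>2", OF Qstep Q0 e0] by blast+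
  have sd1: "summable (\<lambda>m. (norm (d (Suc m)))\<^sup>2)"
    using summable_mult[OF sQ, of "1 / (4 * c0)"] c0 by simp
  hence sd: "summable (\<lambda>m. (norm (d m))\<^sup>2)" by (subst summable_Suc_iff[symmetric])
  define K where "K = Q 0 / \<rho>2"
  have dK: "(norm (d m))\<^sup>2 \<le> K" for m
  proof -
    have "0 \<le> \<rho>1 * (norm (s (Suc m)))\<^sup>2" "0 \<le> \<rho>2 * (norm (r (Suc m)))\<^sup>2" using r1 r2 by simp_all
    hence "\<rho>2 * (norm (d m))\<^sup>2 \<le> Q 0" using Qle[of m] unfolding Q_def[of m] by linarith
    thus ?thesis using r2 by (simp add: K_def field_simps)
  qed
  have dK': "norm (d m) \<le> sqrt K" for m using dK[of m] by (simp add: real_le_rsqrt)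
  have K0: "K \<ge> 0" using dK[of 0] zero_le_power2[of "norm (d 0)"] by linarith
  have DnV: "Dn (Suc m) \<ge> c0 * (norm (v (Suc m)))\<^sup>2" for m
    using subgH[of m] by (simp add: Dn_def v_def norm_minus_commute)
  have EtV: "Et m \<ge> c0 * (norm (v (Suc m)))\<^sup>2 - (\<rho>2 * sqrt K) * norm (v (Suc m))" for m
  proof -
    have "\<bar>inner (d m) (v (Suc m))\<bar> \<le> norm (d m) * norm (v (Suc m))" by (rule Cauchy_Schwarz_ineq2)
    also have "\<dots> \<le> sqrt K * norm (v (Suc m))" using dK'[of m] by (simp add: mult_right_mono)
    finally have "- (sqrt K * norm (v (Suc m))) \<le> inner (d m) (v (Suc m))" by (simp add: abs_le_iff)
    hence "\<rho>2 * (- (sqrt K * norm (v (Suc m)))) \<le> \<rho>2 * inner (d m) (v (Suc m))"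
      by (rule mult_left_mono) (use r2 in simp)
    hence "\<rho>2 * inner (d m) (v (Suc m)) \<ge> - (\<rho>2 * (sqrt K * norm (v (Suc m))))" by simp
    thus ?thesis using DnV[of m] by (simp add: Et_def algebra_simps)
  qed
  have Etlb: "Et m \<ge> - ((\<rho>2 * sqrt K)\<^sup>2 / (4 * c0))" for m
    using EtV[of m] lowq[OF c0, where t="norm (v (Suc m))" and p="\<rho>2 * sqrt K"] by linarith
  have sg: "summable (\<lambda>m. \<rho>2 * ((norm (d m))\<^sup>2 + (norm (d (Suc m)))\<^sup>2))"
    using sd sd1 by (intro summable_mult summable_add)
  have cE: "convergent Et"
    by (rule quasi_fejer_conv[OF Estep sg _ Etlb]) (use r2 in simp)
  then obtain LE where LE: "Et \<longlonglongrightarrow> LE" by (auto simp: convergent_def)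
  obtain M where M: "\<And>m. norm (Et m) \<le> M" using convergent_imp_Bseq[OF cE] unfolding Bseq_def by blast
  define V where "V = 2 * (M + (\<rho>2 * sqrt K)\<^sup>2 / (2 * c0)) / c0"
  have vV: "norm (v (Suc m)) \<le> sqrt V" for m
  proof -
    let ?t = "norm (v (Suc m))"
    have "Et m \<le> M" using M[of m] by simp
    moreover have "(c0 / 2) * ?t\<^sup>2 - (\<rho>2 * sqrt K) * ?t \<ge> - ((\<rho>2 * sqrt K)\<^sup>2 / (4 * (c0 / 2)))"
      by (rule lowq) (use c0 in simp)
    ultimately have "(c0 / 2) * ?t\<^sup>2 \<le> M + (\<rho>2 * sqrt K)\<^sup>2 / (2 * c0)" using EtV[of m] by simp
    hence "?t\<^sup>2 \<le> V" using c0 by (simp add: V_def field_simps)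
    thus ?thesis by (simp add: real_le_rsqrt)
  qed
  have dz: "(\<lambda>m. norm (d m)) \<longlonglongrightarrow> 0"
  proof -
    have "(\<lambda>m. sqrt ((norm (d m))\<^sup>2)) \<longlonglongrightarrow> sqrt 0"
      by (intro tendsto_real_sqrt summable_LIMSEQ_zero sd)
    thus ?thesis by simp
  qed
  have iz: "(\<lambda>m. \<rho>2 * inner (d m) (v (Suc m))) \<longlonglongrightarrow> 0"
  proof (rule Lim_null_comparison)
    show "\<forall>\<^sub>F m in sequentially. norm (\<rho>2 * inner (d m) (v (Suc m))) \<le> \<rho>2 * sqrt V * norm (d m)"
    proof (intro always_eventually allI)
      fix m
      have "\<bar>inner (d m) (v (Suc m))\<bar> \<le> norm (d m) * norm (v (Suc m))" by (rule Cauchy_Schwarz_ineq2)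
      also have "\<dots> \<le> norm (d m) * sqrt V" using vV[of m] by (simp add: mult_left_mono)
      finally show "norm (\<rho>2 * inner (d m) (v (Suc m))) \<le> \<rho>2 * sqrt V * norm (d m)"
        using r2 by (simp add: abs_mult mult_left_mono algebra_simps)
    qed
    show "(\<lambda>m. \<rho>2 * sqrt V * norm (d m)) \<longlonglongrightarrow> 0"
      using tendsto_mult_left[OF dz, of "\<rho>2 * sqrt V"] by simp
  qed
  have "(\<lambda>m. Et m - \<rho>2 * inner (d m) (v (Suc m))) \<longlonglongrightarrow> LE - 0"
    by (intro tendsto_diff LE iz)
  hence DL: "(\<lambda>m. Dn (Suc m)) \<longlonglongrightarrow> LE" by (simp add: Et_def)
  have "bregman f (mu (Suc k)) yh (y (Suc k)) = ereal (Dn (Suc k))" for k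
    by (simp add: bregman_def finh fin Dn_def)
  hence "(\<lambda>k. bregman f (mu (Suc k)) yh (y (Suc k))) \<longlonglongrightarrow> ereal LE"
    using DL by simp
  thus ?thesis by blast
qed

end
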